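(* Let $X\subseteq\mathbb{R}^n$ be nonempty, closed, convex and bounded; let $F:X\to\mathbb{R}^n$ be $L_F$-Lipschitz continuous and monotone on $X$; let $H:X\to\mathbb{R}^n$ be $L_H$-Lipschitz continuous and monotone on $X$; and assume $\mathrm{SOL}(\mathrm{SOL}(X,F),H)\neq\emptyset$. Given $\gamma>0$, positive scalars $\{\eta_k\}$ and $x_0\in X$, define for $k\ge0$: $y_{k+1}=\Pi_X[x_k-\gamma(F(x_k)+\eta_kH(x_k))]$, $x_{k+1}=\Pi_X[x_k-\gamma(F(y_{k+1})+\eta_kH(y_{k+1}))]$, and $\bar y_K=\frac1K\sum_{k=0}^{K-1}y_{k+1}$. Assume $\gamma^2(L_F^2+\eta_0^2L_H^2)\le0.5$. Case 1 (diminishing regularization): Let $\eta_k=\frac{\eta_0}{(k+1)^b}$ with arbitrary $b\in(0,1)$. Then for all $K\ge2^{1/(1-b)}$: (1-i) $-B_H\,\mathrm{dist}(\bar y_K,\mathrm{SOL}(X,F))\le\mathrm{Gap}(\bar y_K,\mathrm{SOL}(X,F),H)\le\frac{D_X^2}{\gamma\eta_0}\frac{1}{K^{1-b}}$; (1-ii) $0\le\mathrm{Gap}(\bar y_K,X,F)\le\frac{D_X^2}{\gamma}\frac1K+\frac{\sqrt2\,\eta_0C_HD_X}{1-b}\frac1{K^b}$; (1-iii) if moreover $\mathrm{VI}(X,F)$ is $\alpha$-weakly sharp of order $\mathcal{M}$, then $\mathrm{Gap}(\bar y_K,\mathrm{SOL}(X,F),H)\ge -B_H\sqrt[\mathcal{M}]{\alpha^{-1}\left(\frac{D_X^2}{\gamma}\frac1K+\frac{\sqrt2\,C_HD_X\eta_0}{1-b}\frac1{K^b}\right)}$.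 Case 2 (constant regularization): Suppose $\mathrm{VI}(X,F)$ is $\alpha$-weakly sharp of order $\mathcal{M}=1$, and let $\eta_k\equiv\eta$ (so $\eta_0=\eta$) with $\eta\le\frac{\alpha}{2\|H(x^* )\|}$, where $x^*$ is an arbitrary point of $\mathrm{SOL}(\mathrm{SOL}(X,F),H)$. Then for all $K\ge1$: (2-i) $\mathrm{dist}(\bar y_K,\mathrm{SOL}(X,F))\le\frac{\|x_0-x^*\|^2}{\gamma\alpha}\frac1K$; (2-ii) $|\mathrm{Gap}(\bar y_K,\mathrm{SOL}(X,F),H)|\le\max\left\{\frac{D_X^2}{\gamma\eta},\frac{B_H\|x_0-x^*\|^2}{\gamma\alpha}\right\}\frac1K$.
   Context: $\mathrm{SOL}(Y,G)=\{x\in Y: G(x)^\top(y-x)\ge0\ \forall y\in Y\}$. $\mathrm{Gap}(x,Y,G)=\sup_{y\in Y}G(y)^\top(x-y)$. $\Pi_X$ Euclidean projection, $\mathrm{dist}(x,Y)=\|x-\Pi_Y[x]\|$. $D_X^2=\sup_{x,y\in X}\frac12\|x-y\|^2$, $B_H=\sup_{x\in\mathrm{SOL}(X,F)}\|H(x)\|$, $C_H=\sup_{x\in X}\|H(x)\|$. $\mathrm{VI}(X,F)$ is $\alpha$-weakly sharp of order $\mathcal{M}$ if there are $\alpha>0$, $\mathcal{M}\ge1$ with $F(x^* )^\top(x-x^* )\ge\alpha\,\mathrm{dist}^{\mathcal{M}}(x,\mathrm{SOL}(X,F))$ for all $x\in X$, $x^*\in\mathrm{SOL}(X,F)$. *)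

theory Defs
  imports "HOL-Analysis.Analysis"
begin

definition SOL :: "'a::euclidean_space set \<Rightarrow> ('a \<Rightarrow> 'a) \<Rightarrow> 'a set" where
  "SOL Y G = {x \<in> Y. \<forall>y\<in>Y. G x \<bullet> (y - x) \<ge> 0}"

definition Gap :: "'a::euclidean_space \<Rightarrow> 'a set \<Rightarrow> ('a \<Rightarrow> 'a) \<Rightarrow> real" where
  "Gap x Y G = (SUP y\<in>Y. G y \<bullet> (x - y))"

definition proj :: "'a::euclidean_space set \<Rightarrow> 'a \<Rightarrow> 'a" where
  "proj X x = closest_point X x"

definition distset :: "'a::euclidean_space \<Rightarrow> 'a set \<Rightarrow> real" where
  "distset x Y = norm (x - proj Y x)"

definition DX2 :: "'a::euclidean_space set \<Rightarrow> real" where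
  "DX2 X = (SUP x\<in>X. SUP y\<in>X. (1/2) * (norm (x - y))^2)"

definition DX :: "'a::euclidean_space set \<Rightarrow> real" where
  "DX X = sqrt (DX2 X)"

definition BH :: "'a::euclidean_space set \<Rightarrow> ('a \<Rightarrow> 'a) \<Rightarrow> ('a \<Rightarrow> 'a) \<Rightarrow> real" where
  "BH X F H = (SUP x\<in>SOL X F. norm (H x))"

definition CH :: "'a::euclidean_space set \<Rightarrow> ('a \<Rightarrow> 'a) \<Rightarrow> real" where
  "CH X H = (SUP x\<in>X. norm (H x))"

definition monotone_op :: "'a::euclidean_space set \<Rightarrow> ('a \<Rightarrow> 'a) \<Rightarrow> bool" where
  "monotone_op X F \<longleftrightarrow> (\<forall>x\<in>X. \<forall>y\<in>X. (F x - F y) \<bullet> (x - y) \<ge> 0)"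

definition weakly_sharp :: "'a::euclidean_space set \<Rightarrow> ('a \<Rightarrow> 'a) \<Rightarrow> real \<Rightarrow> real \<Rightarrow> bool" where
  "weakly_sharp X F \<alpha> M \<longleftrightarrow> \<alpha> > 0 \<and> M \<ge> 1 \<and>
     (\<forall>x\<in>X. \<forall>xs\<in>SOL X F. F xs \<bullet> (x - xs) \<ge> \<alpha> * (distset x (SOL X F)) powr M)"

end

theory Submission
  imports Defs
begin

lemma proj_in: "closed X \<Longrightarrow> X \<noteq> {} \<Longrightarrow> proj X z \<in> X"
  unfolding proj_def by (rule closest_point_in_set)

lemma proj_dot: "convex X \<Longrightarrow> closed X \<Longrightarrow> u \<in> X \<Longrightarrow> (z - proj X z) \<bullet> (u - proj X z) \<le> 0"
  unfolding proj_def by (rule closest_point_dot)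

lemma eg_step:
  fixes X :: "'a::euclidean_space set" and G :: "'a \<Rightarrow> 'a"
  assumes X: "convex X" "closed X" and u: "u \<in> X"
    and w: "w = proj X (z - \<gamma> *\<^sub>R G z)" and zp: "zp = proj X (z - \<gamma> *\<^sub>R G w)"
    and L: "norm (G w - G z) \<le> L * norm (w - z)" "\<gamma>\<^sup>2 * L\<^sup>2 \<le> 1" "L \<ge> 0" "\<gamma> > 0"
  shows "\<gamma> * (G w \<bullet> (w - u)) \<le> (norm (z - u))\<^sup>2 / 2 - (norm (zp - u))\<^sup>2 / 2"
proof -
  have ne: "X \<noteq> {}" using u by auto
  have zpX: "zp \<in> X" using zp proj_in[OF X(2) ne] by simp
  have P1: "(z - \<gamma> *\<^sub>R G w - zp) \<bullet> (u - zp) \<le> 0" using proj_dot[OF X u] zp by simp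
  have P2: "(z - \<gamma> *\<^sub>R G z - w) \<bullet> (zp - w) \<le> 0" using proj_dot[OF X zpX] w by simp
  have I1: "(norm (zp - u))\<^sup>2 = (norm (z - u))\<^sup>2 - (norm (z - zp))\<^sup>2 + 2 * ((z - zp) \<bullet> (u - zp))"
    by (simp add: power2_norm_eq_inner inner_diff_left inner_diff_right inner_commute algebra_simps)
  have I2: "-2 * ((z - w) \<bullet> (zp - w)) = (norm (zp - z))\<^sup>2 - (norm (z - w))\<^sup>2 - (norm (zp - w))\<^sup>2"
    by (simp add: power2_norm_eq_inner inner_diff_left inner_diff_right inner_commute algebra_simps)
  have P1': "(z - zp) \<bullet> (u - zp) \<le> \<gamma> * (G w \<bullet> (u - zp))"
    using P1 by (simp add: inner_diff_left)
  have P2': "(z - w) \<bullet> (zp - w) \<le> \<gamma> * (G z \<bullet> (zp - w))"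
    using P2 by (simp add: inner_diff_left)
  have split: "G w \<bullet> (u - zp) = G w \<bullet> (u - w) + (G w - G z) \<bullet> (w - zp) + G z \<bullet> (w - zp)"
    by (simp add: inner_diff_left inner_diff_right)
  have CS: "(G w - G z) \<bullet> (w - zp) \<le> L * norm (w - z) * norm (w - zp)"
    using norm_cauchy_schwarz[of "G w - G z" "w - zp"] mult_right_mono[OF L(1) norm_ge_zero[of "w - zp"]] by linarith
  have Y: "2 * \<gamma> * (L * norm (w - z) * norm (w - zp)) \<le> (norm (z - w))\<^sup>2 + (norm (zp - w))\<^sup>2"
  proof -
    have a: "(\<gamma> * L * norm (w - z))\<^sup>2 \<le> (norm (w - z))\<^sup>2"
      using mult_right_mono[OF L(2), of "(norm (w - z))\<^sup>2"] by (simp add: power_mult_distrib)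
    have "2 * (\<gamma> * L * norm (w - z)) * norm (w - zp) \<le> (\<gamma> * L * norm (w - z))\<^sup>2 + (norm (w - zp))\<^sup>2"
      by (smt (verit) sum_squares_bound)
    then show ?thesis using a by (simp add: norm_minus_commute algebra_simps)
  qed
  have "(norm (zp - u))\<^sup>2 \<le> (norm (z - u))\<^sup>2 - (norm (z - w))\<^sup>2 - (norm (zp - w))\<^sup>2
        + 2 * \<gamma> * (G w \<bullet> (u - w)) + 2 * \<gamma> * ((G w - G z) \<bullet> (w - zp))"
  proof -
    have "G z \<bullet> (w - zp) = - (G z \<bullet> (zp - w))" by (simp add: inner_diff_right)
    then show ?thesis using I1 I2 P1' P2' split \<open>\<gamma> > 0\<close> by (simp add: norm_minus_commute algebra_simps)
  qed
  then have "(norm (zp - u))\<^sup>2 \<le> (norm (z - u))\<^sup>2 + 2 * \<gamma> * (G w \<bullet> (u - w))"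
    using CS Y \<open>\<gamma> > 0\<close> mult_left_mono[OF CS, of "2*\<gamma>"] by (simp add: algebra_simps)
  moreover have "G w \<bullet> (u - w) = - (G w \<bullet> (w - u))" by (simp add: inner_diff_right)
  ultimately show ?thesis by simp
qed

lemma SOL_minty:
  fixes X :: "'a::euclidean_space set"
  assumes X: "convex X" and F: "L-lipschitz_on X F" "monotone_op X F"
  shows "SOL X F = X \<inter> (\<Inter>y\<in>X. {x. F y \<bullet> x \<le> F y \<bullet> y})"
proof (intro equalityI subsetI)
  fix x assume x: "x \<in> SOL X F"
  then have xX: "x \<in> X" and xs: "\<forall>y\<in>X. F x \<bullet> (y - x) \<ge> 0" by (auto simp: SOL_def)
  have "F y \<bullet> x \<le> F y \<bullet> y" if y: "y \<in> X" for y
  proof -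
    have "(F y - F x) \<bullet> (y - x) \<ge> 0" using F(2) xX y by (auto simp: monotone_op_def)
    then have "F y \<bullet> (y - x) \<ge> F x \<bullet> (y - x)" by (simp add: inner_diff_left)
    with xs y have "F y \<bullet> (y - x) \<ge> 0" by force
    then show ?thesis by (simp add: inner_diff_right)
  qed
  with xX show "x \<in> X \<inter> (\<Inter>y\<in>X. {x. F y \<bullet> x \<le> F y \<bullet> y})" by auto
next
  fix x assume x: "x \<in> X \<inter> (\<Inter>y\<in>X. {x. F y \<bullet> x \<le> F y \<bullet> y})"
  then have xX: "x \<in> X" and h: "\<And>y. y \<in> X \<Longrightarrow> F y \<bullet> (y - x) \<ge> 0" by (auto simp: inner_diff_right)
  have L0: "L \<ge> 0" using F(1) lipschitz_on_nonneg by blast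
  have "F x \<bullet> (z - x) \<ge> 0" if z: "z \<in> X" for z
  proof (rule ccontr)
    assume "\<not> ?thesis"
    then have c: "F x \<bullet> (z - x) < 0" by simp
    define c where "c = F x \<bullet> (z - x)"
    define M where "M = L * (norm (z - x))\<^sup>2 + 1"
    have M: "M > 0" using L0 by (simp add: M_def add_nonneg_pos)
    define t where "t = min 1 ((- c) / (2 * M))"
    have t0: "t > 0" using c M by (simp add: t_def c_def divide_neg_pos)
    have t1: "t \<le> 1" by (simp add: t_def)
    have tM: "t * M \<le> - c / 2" using M by (simp add: t_def min_def field_simps split: if_splits)
    define yt where "yt = x + t *\<^sub>R (z - x)"
    have ytX: "yt \<in> X" using convexD_alt[OF X xX z, of t] t0 t1 by (simp add: yt_def algebra_simps)
    have "F yt \<bullet> (yt - x) \<ge> 0" using h[OF ytX] .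
    then have "t * (F yt \<bullet> (z - x)) \<ge> 0" by (simp add: yt_def)
    then have A: "F yt \<bullet> (z - x) \<ge> 0" using t0 by (simp add: zero_le_mult_iff)
    have "norm (F yt - F x) \<le> L * norm (yt - x)" using lipschitz_on_normD[OF F(1) ytX xX] .
    also have "\<dots> = L * t * norm (z - x)" using t0 by (simp add: yt_def)
    finally have B: "norm (F yt - F x) \<le> L * t * norm (z - x)" .
    have "(F yt - F x) \<bullet> (z - x) \<le> norm (F yt - F x) * norm (z - x)" by (rule norm_cauchy_schwarz)
    also have "\<dots> \<le> L * t * norm (z - x) * norm (z - x)" using B by (simp add: mult_right_mono)
    also have "\<dots> \<le> t * M" using t0 L0 by (simp add: M_def power2_eq_square algebra_simps)
    finally have "F yt \<bullet> (z - x) - c \<le> t * M" by (simp add: c_def inner_diff_left)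
    with A tM c c_def show False by linarith
  qed
  with xX show "x \<in> SOL X F" by (auto simp: SOL_def)
qed

lemma SOL_props:
  fixes X :: "'a::euclidean_space set"
  assumes X: "convex X" "closed X" and F: "L-lipschitz_on X F" "monotone_op X F"
  shows "closed (SOL X F)" "convex (SOL X F)" "SOL X F \<subseteq> X"
proof -
  show "closed (SOL X F)" unfolding SOL_minty[OF X(1) F]
    by (intro closed_Int X closed_INT ballI) (simp add: closed_halfspace_le)
  show "convex (SOL X F)" unfolding SOL_minty[OF X(1) F]
    by (intro convex_Int X convex_INT ballI) (simp add: convex_halfspace_le)
  show "SOL X F \<subseteq> X" by (auto simp: SOL_def)
qed

lemma lip_cont: "L-lipschitz_on X F \<Longrightarrow> continuous_on X F"
  using lipschitz_on_continuous_on by blast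

lemma Gap_le:
  assumes "Y \<noteq> {}" "\<And>y. y \<in> Y \<Longrightarrow> G y \<bullet> (x - y) \<le> B"
  shows "Gap x Y G \<le> B"
  unfolding Gap_def using assms by (intro cSUP_least) auto

lemma Gap_ge:
  fixes X :: "'a::euclidean_space set"
  assumes "compact X" "continuous_on X G" "Y \<subseteq> X" "y \<in> Y"
  shows "G y \<bullet> (x - y) \<le> Gap x Y G"
proof -
  have "continuous_on X (\<lambda>y. G y \<bullet> (x - y))"
    by (intro continuous_intros assms)
  then have "compact ((\<lambda>y. G y \<bullet> (x - y)) ` X)" using assms(1) compact_continuous_image by blast
  then have "bdd_above ((\<lambda>y. G y \<bullet> (x - y)) ` X)" by (simp add: bounded_imp_bdd_above compact_imp_bounded)
  then have "bdd_above ((\<lambda>y. G y \<bullet> (x - y)) ` Y)" using assms(3) by (meson bdd_above_mono image_mono)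
  then show ?thesis unfolding Gap_def using assms(4) by (rule cSUP_upper2) simp
qed

lemma norm_le_SUP:
  fixes X :: "'a::euclidean_space set"
  assumes "compact X" "continuous_on X H" "Y \<subseteq> X" "y \<in> Y"
  shows "norm (H y) \<le> (SUP x\<in>Y. norm (H x))"
proof -
  have "continuous_on X (\<lambda>y. norm (H y))" by (intro continuous_intros assms)
  then have "compact ((\<lambda>y. norm (H y)) ` X)" using assms(1) compact_continuous_image by blast
  then have "bdd_above ((\<lambda>y. norm (H y)) ` X)" by (simp add: bounded_imp_bdd_above compact_imp_bounded)
  then have "bdd_above ((\<lambda>y. norm (H y)) ` Y)" using assms(3) by (meson bdd_above_mono image_mono)
  then show ?thesis using assms(4) by (rule cSUP_upper2) simp
qed

lemma DX2_ge:
  fixes X :: "'a::euclidean_space set"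
  assumes "bounded X" "x \<in> X" "u \<in> X"
  shows "(norm (x - u))\<^sup>2 / 2 \<le> DX2 X"
proof -
  obtain R where R: "\<And>v. v \<in> X \<Longrightarrow> norm v \<le> R" using assms(1) bounded_iff by blast
  have bd: "(1/2) * (norm (a - v))\<^sup>2 \<le> 2 * R\<^sup>2" if "a \<in> X" "v \<in> X" for a v
  proof -
    have "norm (a - v) \<le> 2 * R" using R[OF that(1)] R[OF that(2)] norm_triangle_ineq4[of a v] by linarith
    then have "(norm (a - v))\<^sup>2 \<le> (2 * R)\<^sup>2" by (meson norm_ge_zero power_mono)
    then show ?thesis by (simp add: power_mult_distrib)
  qed
  have inner: "bdd_above ((\<lambda>v. (1/2) * (norm (a - v))\<^sup>2) ` X)" if "a \<in> X" for a
    using bd[OF that] by (intro bdd_aboveI2[where M="2 * R\<^sup>2"]) auto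
  have outer: "bdd_above ((\<lambda>a. SUP v\<in>X. (1/2) * (norm (a - v))\<^sup>2) ` X)"
    using bd assms(2) by (intro bdd_aboveI2[where M="2 * R\<^sup>2"] cSUP_least) auto
  have "(1/2) * (norm (x - u))\<^sup>2 \<le> (SUP v\<in>X. (1/2) * (norm (x - v))\<^sup>2)"
    using inner[OF assms(2)] assms(3) by (rule cSUP_upper2) simp
  also have "\<dots> \<le> DX2 X" unfolding DX2_def using outer assms(2) by (rule cSUP_upper2) simp
  finally show ?thesis by simp
qed

lemma DX_ge:
  fixes X :: "'a::euclidean_space set"
  assumes "bounded X" "x \<in> X" "u \<in> X"
  shows "norm (x - u) \<le> sqrt 2 * DX X"
proof -
  have "(norm (x - u))\<^sup>2 \<le> 2 * DX2 X" using DX2_ge[OF assms] by simp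
  then have "norm (x - u) \<le> sqrt (2 * DX2 X)" using real_le_rsqrt by blast
  then show ?thesis by (simp add: DX_def real_sqrt_mult)
qed

lemma distset_le:
  assumes "closed S" "s \<in> S"
  shows "distset x S \<le> norm (x - s)"
  using closest_point_le[OF assms, of x] by (simp add: distset_def proj_def dist_norm)

lemma sum_pow_bound:
  fixes b :: real
  assumes b: "0 < b" "b < 1"
  shows "(\<Sum>k<K. 1 / (real k + 1) powr b) \<le> real K powr (1 - b) / (1 - b)"
proof (induction K)
  case 0 then show ?case by simp
next
  case (Suc K)
  have step: "1 / (real K + 1) powr b \<le> ((real K + 1) powr (1 - b) - real K powr (1 - b)) / (1 - b)"
  proof (cases "K = 0")
    case True then show ?thesis using b by simp
  next
    case False
    define s where "s = real K / (real K + 1)"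
    have s0: "s > 0" using False by (simp add: s_def)
    have "s powr (1 - b) * 1 powr b \<le> (1 - b) * s + b * 1"
      using Youngs_inequality_0[of "1 - b" b s 1] b s0 by simp
    then have Y: "s powr (1 - b) \<le> (1 - b) * s + b" by simp
    have P: "real K powr (1 - b) = s powr (1 - b) * (real K + 1) powr (1 - b)"
      by (simp add: s_def powr_divide)
    have Q: "(real K + 1) powr (1 - b) = (real K + 1) * (real K + 1) powr (- b)"
      by (simp add: powr_diff powr_minus divide_inverse)
    have "real K powr (1 - b) \<le> ((1 - b) * s + b) * (real K + 1) powr (1 - b)"
      using P Y by (simp add: mult_right_mono)
    also have "\<dots> = (real K + 1) powr (1 - b) - (1 - b) * (real K + 1) powr (- b)"
      using Q by (simp add: s_def field_simps)
    finally have "(1 - b) * (real K + 1) powr (- b) \<le> (real K + 1) powr (1 - b) - real K powr (1 - b)" by simp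
    then show ?thesis using b by (simp add: field_simps powr_minus)
  qed
  have "real (Suc K) = real K + 1" by simp
  then show ?case using Suc.IH step by (simp add: diff_divide_distrib add.commute)
qed

lemma weighted_tele:
  fixes a c :: "nat \<Rightarrow> real"
  assumes "\<And>k. 0 \<le> a k" "\<And>k. a k \<le> D" "\<And>k. 0 \<le> c k" "\<And>k. c k \<le> c (Suc k)"
  shows "(\<Sum>k<Suc n. c k * (a k - a (Suc k))) \<le> c n * (D - a (Suc n))"
proof (induction n)
  case 0 then show ?case using mult_right_mono[OF assms(2)[of 0] assms(3)[of 0]] by (simp add: algebra_simps)
next
  case (Suc n)
  have "c n * (D - a (Suc n)) \<le> c (Suc n) * (D - a (Suc n))"
    using assms(2)[of "Suc n"] assms(4)[of n] by (simp add: mult_right_mono)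
  then show ?case using Suc.IH by (simp add: algebra_simps)
qed

lemma avg_in:
  fixes C :: "'a::real_vector set"
  assumes "convex C" "K > 0" "\<And>k. k < K \<Longrightarrow> p k \<in> C"
  shows "(1 / real K) *\<^sub>R (\<Sum>k<K. p k) \<in> C"
proof -
  have "(\<Sum>k\<in>{..<K}. (1 / real K) *\<^sub>R p k) \<in> C"
    using assms by (intro convex_sum) auto
  then show ?thesis by (simp add: scaleR_sum_right)
qed

lemma sum_inner_avg:
  fixes c u :: "'a::euclidean_space"
  assumes "K > 0" "v = (1 / real K) *\<^sub>R (\<Sum>k<K. p k)"
  shows "(\<Sum>k<K. c \<bullet> (p k - u)) = real K * (c \<bullet> (v - u))"
proof -
  have "real K *\<^sub>R v = (\<Sum>k<K. p k)" using assms by simp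
  then have "c \<bullet> (\<Sum>k<K. p k) = real K * (c \<bullet> v)" by (metis inner_scaleR_right)
  then show ?thesis
    by (simp add: inner_diff_right sum_subtractf inner_sum_right algebra_simps)
qed

lemma dist_avg:
  fixes S :: "'a::euclidean_space set"
  assumes S: "closed S" "convex S" "S \<noteq> {}" and K: "K > 0" and v: "v = (1 / real K) *\<^sub>R (\<Sum>k<K. p k)"
  shows "distset v S \<le> (1 / real K) * (\<Sum>k<K. distset (p k) S)"
proof -
  define q where "q = (1 / real K) *\<^sub>R (\<Sum>k<K. proj S (p k))"
  have qS: "q \<in> S" unfolding q_def using K S by (intro avg_in) (auto simp: proj_def closest_point_in_set)
  have "distset v S \<le> norm (v - q)" by (rule distset_le[OF S(1) qS])
  also have "v - q = (1 / real K) *\<^sub>R (\<Sum>k<K. p k - proj S (p k))"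
    by (simp add: v q_def sum_subtractf scaleR_diff_right)
  also have "norm \<dots> \<le> (1 / real K) * (\<Sum>k<K. norm (p k - proj S (p k)))"
    using norm_sum[of "\<lambda>k. p k - proj S (p k)" "{..<K}"] by (simp add: mult_left_mono divide_inverse)
  finally show ?thesis by (simp add: distset_def)
qed

lemma gap_lower:
  fixes X :: "'a::euclidean_space set"
  assumes "compact X" "continuous_on X H" "S \<subseteq> X" "closed S" "S \<noteq> {}"
  shows "- (SUP x\<in>S. norm (H x)) * distset v S \<le> Gap v S H"
proof -
  define p where "p = proj S v"
  have pS: "p \<in> S" using assms by (simp add: p_def proj_def closest_point_in_set)
  have "H p \<bullet> (v - p) \<le> Gap v S H" by (rule Gap_ge[OF assms(1-3) pS])
  moreover have "- (norm (H p) * norm (v - p)) \<le> H p \<bullet> (v - p)"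
    using norm_cauchy_schwarz[of "H p" "-(v - p)"] by (simp add: norm_minus_commute inner_diff_right)
  moreover have "norm (H p) * norm (v - p) \<le> (SUP x\<in>S. norm (H x)) * norm (v - p)"
    using norm_le_SUP[OF assms(1-3) pS] by (simp add: mult_right_mono)
  ultimately show ?thesis by (simp add: distset_def p_def)
qed

theorem theorem3p5:
  fixes X :: "'a::euclidean_space set" and F H :: "'a \<Rightarrow> 'a"
    and LF LH \<gamma> :: real and \<eta> :: "nat \<Rightarrow> real" and x y :: "nat \<Rightarrow> 'a"
    and ybar :: "nat \<Rightarrow> 'a"
  assumes X: "X \<noteq> {}" "closed X" "convex X" "bounded X"
    and F: "LF-lipschitz_on X F" "monotone_op X F"
    and H: "LH-lipschitz_on X H" "monotone_op X H"
    and bil: "SOL (SOL X F) H \<noteq> {}"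
    and gam: "\<gamma> > 0"
    and eta_pos: "\<And>k. \<eta> k > 0"
    and x0: "x 0 \<in> X"
    and ystep: "\<And>k. y (Suc k) = proj X (x k - \<gamma> *\<^sub>R (F (x k) + \<eta> k *\<^sub>R H (x k)))"
    and xstep: "\<And>k. x (Suc k) = proj X (x k - \<gamma> *\<^sub>R (F (y (Suc k)) + \<eta> k *\<^sub>R H (y (Suc k))))"
    and ybar: "\<And>K. ybar K = (1 / real K) *\<^sub>R (\<Sum>k<K. y (Suc k))"
    and step: "\<gamma>\<^sup>2 * (LF\<^sup>2 + (\<eta> 0)\<^sup>2 * LH\<^sup>2) \<le> 1/2"
  shows
   "(\<forall>b. 0 < b \<and> b < 1 \<and> (\<forall>k. \<eta> k = \<eta> 0 / (real k + 1) powr b) \<longrightarrow>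
      (\<forall>K::nat. real K \<ge> 2 powr (1 / (1 - b)) \<longrightarrow>
         (- BH X F H * distset (ybar K) (SOL X F) \<le> Gap (ybar K) (SOL X F) H
          \<and> Gap (ybar K) (SOL X F) H \<le> DX2 X / (\<gamma> * \<eta> 0) * (1 / real K powr (1 - b)))
       \<and> (0 \<le> Gap (ybar K) X F
          \<and> Gap (ybar K) X F \<le> DX2 X / \<gamma> * (1 / real K)
               + sqrt 2 * \<eta> 0 * CH X H * DX X / (1 - b) * (1 / real K powr b))
       \<and> (\<forall>\<alpha> M. weakly_sharp X F \<alpha> M \<longrightarrow>
          Gap (ybar K) (SOL X F) H \<ge> - BH X F H *
            ((1 / \<alpha>) * (DX2 X / \<gamma> * (1 / real K)
               + sqrt 2 * CH X H * DX X * \<eta> 0 / (1 - b) * (1 / real K powr b))) powr (1 / M))))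
    \<and>
    (\<forall>\<alpha> xs. weakly_sharp X F \<alpha> 1 \<and> xs \<in> SOL (SOL X F) H \<and> (\<forall>k. \<eta> k = \<eta> 0)
        \<and> 2 * \<eta> 0 * norm (H xs) \<le> \<alpha> \<longrightarrow>
      (\<forall>K::nat. K \<ge> 1 \<longrightarrow>
         distset (ybar K) (SOL X F) \<le> (norm (x 0 - xs))\<^sup>2 / (\<gamma> * \<alpha>) * (1 / real K)
       \<and> \<bar>Gap (ybar K) (SOL X F) H\<bar> \<le>
           max (DX2 X / (\<gamma> * \<eta> 0)) (BH X F H * (norm (x 0 - xs))\<^sup>2 / (\<gamma> * \<alpha>)) * (1 / real K)))"
proof -
  have LF0: "LF \<ge> 0" using F(1) lipschitz_on_nonneg by blast
  have LH0: "LH \<ge> 0" using H(1) lipschitz_on_nonneg by blast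
  have cX: "compact X" using X by (simp add: compact_eq_bounded_closed)
  have contF: "continuous_on X F" using F(1) by (rule lip_cont)
  have contH: "continuous_on X H" using H(1) by (rule lip_cont)
  define S where "S = SOL X F"
  have Sc: "closed S" "convex S" "S \<subseteq> X" using SOL_props[OF X(3,2) F] by (auto simp: S_def)
  have Sne: "S \<noteq> {}" using bil by (auto simp: SOL_def S_def)
  have xX: "x k \<in> X" for k
  proof (cases k)
    case 0 then show ?thesis using x0 by simp
  next
    case (Suc j) then show ?thesis using xstep proj_in[OF X(2,1)] by simp
  qed
  have yX: "y (Suc k) \<in> X" for k using ystep proj_in[OF X(2,1)] by simp
  define a where "a = (\<lambda>k u. (norm (x k - u))\<^sup>2 / 2)"
  have a0: "0 \<le> a k u" for k u by (simp add: a_def)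
  have aD: "a k u \<le> DX2 X" if "u \<in> X" for k u using DX2_ge[OF X(4) xX that] by (simp add: a_def)
  have CH: "norm (H v) \<le> CH X H" if "v \<in> X" for v
    unfolding CH_def using norm_le_SUP[OF cX contH order_refl that] .
  have CH0: "CH X H \<ge> 0" using CH[OF x0] norm_ge_zero order_trans by blast
  have DX0: "DX X \<ge> 0"
    using DX2_ge[OF X(4) x0 x0] by (simp add: DX_def)
  have BH0: "BH X F H \<ge> 0"
  proof -
    obtain s where "s \<in> S" using Sne by blast
    then show ?thesis unfolding BH_def S_def[symmetric]
      using norm_le_SUP[OF cX contH Sc(3)] norm_ge_zero order_trans by blast
  qed
  have LB: "- BH X F H * distset v S \<le> Gap v S H" for v
    unfolding BH_def S_def[symmetric] by (rule gap_lower[OF cX contH Sc(3) Sc(1) Sne])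
  have ybarX: "ybar K \<in> X" if "K > 0" for K
    using ybar avg_in[OF X(3) that, of "\<lambda>k. y (Suc k)"] yX by simp
  have avg: "(\<Sum>k<K. c \<bullet> (y (Suc k) - u)) = real K * (c \<bullet> (ybar K - u))" if "K > 0" for K c u
    by (rule sum_inner_avg[OF that ybar])
  have EG: "\<gamma> * (F (y (Suc k)) \<bullet> (y (Suc k) - u) + \<eta> k * (H (y (Suc k)) \<bullet> (y (Suc k) - u)))
      \<le> a k u - a (Suc k) u" if le: "\<eta> k \<le> \<eta> 0" and u: "u \<in> X" for k u
  proof -
    define G where "G = (\<lambda>v. F v + \<eta> k *\<^sub>R H v)"
    define L where "L = LF + \<eta> k * LH"
    have L0: "L \<ge> 0" using LF0 LH0 eta_pos[of k] by (simp add: L_def)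
    have Lip: "norm (G (y (Suc k)) - G (x k)) \<le> L * norm (y (Suc k) - x k)"
    proof -
      have "G (y (Suc k)) - G (x k) = (F (y (Suc k)) - F (x k)) + \<eta> k *\<^sub>R (H (y (Suc k)) - H (x k))"
        by (simp add: G_def algebra_simps)
      then have "norm (G (y (Suc k)) - G (x k)) \<le> norm (F (y (Suc k)) - F (x k)) + \<eta> k * norm (H (y (Suc k)) - H (x k))"
        using norm_triangle_ineq[of "F (y (Suc k)) - F (x k)" "\<eta> k *\<^sub>R (H (y (Suc k)) - H (x k))"] eta_pos[of k]
        by simp
      also have "\<dots> \<le> LF * norm (y (Suc k) - x k) + \<eta> k * (LH * norm (y (Suc k) - x k))"
        using lipschitz_on_normD[OF F(1) yX xX] lipschitz_on_normD[OF H(1) yX xX] eta_pos[of k]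
        by (intro add_mono mult_left_mono) auto
      finally show ?thesis by (simp add: L_def algebra_simps)
    qed
    have gL: "\<gamma>\<^sup>2 * L\<^sup>2 \<le> 1"
    proof -
      have e2: "(\<eta> k)\<^sup>2 \<le> (\<eta> 0)\<^sup>2" using le eta_pos[of k] by (simp add: power_mono)
      have "L\<^sup>2 \<le> 2 * (LF\<^sup>2 + (\<eta> k)\<^sup>2 * LH\<^sup>2)"
        using sum_squares_bound[of LF "\<eta> k * LH"] by (simp add: L_def power2_eq_square algebra_simps)
      also have "\<dots> \<le> 2 * (LF\<^sup>2 + (\<eta> 0)\<^sup>2 * LH\<^sup>2)" using e2 by (simp add: mult_right_mono)
      finally have "\<gamma>\<^sup>2 * L\<^sup>2 \<le> \<gamma>\<^sup>2 * (2 * (LF\<^sup>2 + (\<eta> 0)\<^sup>2 * LH\<^sup>2))" by (simp add: mult_left_mono)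
      then show ?thesis using step by (simp add: algebra_simps)
    qed
    have "\<gamma> * (G (y (Suc k)) \<bullet> (y (Suc k) - u)) \<le> (norm (x k - u))\<^sup>2 / 2 - (norm (x (Suc k) - u))\<^sup>2 / 2"
      by (rule eg_step[OF X(3,2) u _ _ Lip gL L0 gam]) (simp_all add: G_def ystep xstep)
    then show ?thesis by (simp add: G_def a_def inner_add_left)
  qed
  have Fmono: "F u \<bullet> (v - u) \<le> F v \<bullet> (v - u)" if "u \<in> X" "v \<in> X" for u v
    using F(2) that unfolding monotone_op_def by (auto simp: inner_diff_left)
  have Hmono: "H u \<bullet> (v - u) \<le> H v \<bullet> (v - u)" if "u \<in> X" "v \<in> X" for u v
    using H(2) that unfolding monotone_op_def by (auto simp: inner_diff_left)
  have gapH: "Gap (ybar (Suc n)) S H \<le> DX2 X * (1 / \<eta> n) / (\<gamma> * real (Suc n))"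
    if le: "\<forall>k. \<eta> k \<le> \<eta> 0" and mono: "\<forall>k. 1 / \<eta> k \<le> 1 / \<eta> (Suc k)" for n
  proof (rule Gap_le[OF Sne])
    fix u assume uS: "u \<in> S"
    then have uX: "u \<in> X" using Sc(3) by blast
    have st: "\<gamma> * (H u \<bullet> (y (Suc k) - u)) \<le> (1 / \<eta> k) * (a k u - a (Suc k) u)" for k
    proof -
      have "F u \<bullet> (y (Suc k) - u) \<ge> 0" using uS yX[of k] by (auto simp: S_def SOL_def)
      then have Fp: "F (y (Suc k)) \<bullet> (y (Suc k) - u) \<ge> 0" using Fmono[OF uX yX[of k]] by linarith
      have "\<gamma> * (\<eta> k * (H (y (Suc k)) \<bullet> (y (Suc k) - u))) \<le> a k u - a (Suc k) u"
      proof -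
        have "0 \<le> \<gamma> * (F (y (Suc k)) \<bullet> (y (Suc k) - u))" using Fp gam by simp
        then show ?thesis using EG[OF le[rule_format] uX, of k] by (simp add: distrib_left)
      qed
      moreover have "\<gamma> * (\<eta> k * (H u \<bullet> (y (Suc k) - u))) \<le> \<gamma> * (\<eta> k * (H (y (Suc k)) \<bullet> (y (Suc k) - u)))"
        using Hmono[OF uX yX[of k]] gam eta_pos[of k] by (simp add: mult_left_mono)
      ultimately have "\<eta> k * (\<gamma> * (H u \<bullet> (y (Suc k) - u))) \<le> a k u - a (Suc k) u" by (simp add: algebra_simps)
      then show ?thesis using eta_pos[of k] by (simp add: pos_le_divide_eq mult.commute)
    qed
    have "\<gamma> * (\<Sum>k<Suc n. H u \<bullet> (y (Suc k) - u)) \<le> (\<Sum>k<Suc n. (1 / \<eta> k) * (a k u - a (Suc k) u))"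
      unfolding sum_distrib_left by (rule sum_mono) (rule st)
    also have "\<dots> \<le> (1 / \<eta> n) * (DX2 X - a (Suc n) u)"
      by (rule weighted_tele) (use a0 aD[OF uX] eta_pos mono in \<open>auto simp: less_imp_le\<close>)
    also have "\<dots> \<le> (1 / \<eta> n) * DX2 X" using a0[of "Suc n" u] eta_pos[of n] by (simp add: divide_right_mono)
    finally have "\<gamma> * (real (Suc n) * (H u \<bullet> (ybar (Suc n) - u))) \<le> DX2 X * (1 / \<eta> n)"
      using avg[of "Suc n" "H u" u] by simp
    then show "H u \<bullet> (ybar (Suc n) - u) \<le> DX2 X * (1 / \<eta> n) / (\<gamma> * real (Suc n))"
    proof -
      have p: "\<gamma> * real (Suc n) > 0" using gam by simp
      show ?thesis using \<open>\<gamma> * (real (Suc n) * _) \<le> _\<close> by (subst pos_le_divide_eq[OF p]) (simp add: algebra_simps)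
    qed
  qed
  have gapF: "Gap (ybar K) X F \<le> DX2 X / (\<gamma> * real K) + sqrt 2 * CH X H * DX X * (\<Sum>k<K. \<eta> k) / real K"
    if le: "\<forall>k. \<eta> k \<le> \<eta> 0" and K: "K > 0" for K
  proof (rule Gap_le[OF X(1)])
    fix u assume uX: "u \<in> X"
    define E where "E = sqrt 2 * CH X H * DX X"
    have E0: "E \<ge> 0" using CH0 DX0 by (simp add: E_def)
    have st: "\<gamma> * (F u \<bullet> (y (Suc k) - u)) \<le> (a k u - a (Suc k) u) + \<gamma> * (\<eta> k * E)" for k
    proof -
      have "- (H (y (Suc k)) \<bullet> (y (Suc k) - u)) \<le> norm (H (y (Suc k))) * norm (y (Suc k) - u)"
        using norm_cauchy_schwarz[of "H (y (Suc k))" "-(y (Suc k) - u)"] by (simp add: norm_minus_commute inner_diff_right)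
      also have "\<dots> \<le> CH X H * (sqrt 2 * DX X)"
        using CH[OF yX[of k]] DX_ge[OF X(4) yX[of k] uX] CH0 by (intro mult_mono) auto
      finally have Hb: "- (H (y (Suc k)) \<bullet> (y (Suc k) - u)) \<le> E" by (simp add: E_def algebra_simps)
      have "\<gamma> * (\<eta> k * (- (H (y (Suc k)) \<bullet> (y (Suc k) - u)))) \<le> \<gamma> * (\<eta> k * E)"
        using mult_left_mono[OF Hb, of "\<gamma> * \<eta> k"] gam eta_pos[of k] by (simp add: algebra_simps)
      moreover have "\<gamma> * (F u \<bullet> (y (Suc k) - u)) \<le> \<gamma> * (F (y (Suc k)) \<bullet> (y (Suc k) - u))"
        using Fmono[OF uX yX[of k]] gam by (simp add: mult_left_mono)
      ultimately show ?thesis using EG[OF le[rule_format] uX, of k] by (simp add: algebra_simps)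
    qed
    have "\<gamma> * (\<Sum>k<K. F u \<bullet> (y (Suc k) - u)) \<le> (\<Sum>k<K. (a k u - a (Suc k) u) + \<gamma> * (\<eta> k * E))"
      unfolding sum_distrib_left by (rule sum_mono) (rule st)
    also have "\<dots> = (a 0 u - a K u) + \<gamma> * E * (\<Sum>k<K. \<eta> k)"
    proof -
      have t: "(\<Sum>k<K. a k u - a (Suc k) u) = a 0 u - a K u" by (rule sum_lessThan_telescope')
      show ?thesis by (simp only: sum.distrib t sum_distrib_left[symmetric] sum_distrib_right[symmetric] mult.assoc mult.commute[of _ E]) (simp add: algebra_simps)
    qed
    also have "\<dots> \<le> DX2 X + \<gamma> * E * (\<Sum>k<K. \<eta> k)" using a0[of K u] aD[OF uX, of 0] by simp
    finally have "\<gamma> * (real K * (F u \<bullet> (ybar K - u))) \<le> DX2 X + \<gamma> * E * (\<Sum>k<K. \<eta> k)"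
      using avg[OF K, of "F u" u] by simp
    then have "F u \<bullet> (ybar K - u) \<le> (DX2 X + \<gamma> * E * (\<Sum>k<K. \<eta> k)) / (\<gamma> * real K)"
    proof -
      have p: "\<gamma> * real K > 0" using gam K by simp
      show ?thesis using \<open>\<gamma> * (real K * _) \<le> _\<close> by (subst pos_le_divide_eq[OF p]) (simp add: algebra_simps)
    qed
    also have "\<dots> = DX2 X / (\<gamma> * real K) + E * (\<Sum>k<K. \<eta> k) / real K"
      using gam by (simp add: add_divide_distrib)
    finally show "F u \<bullet> (ybar K - u) \<le> DX2 X / (\<gamma> * real K) + sqrt 2 * CH X H * DX X * (\<Sum>k<K. \<eta> k) / real K"
      by (simp add: E_def)
  qed
  have c1: "(- BH X F H * distset (ybar K) (SOL X F) \<le> Gap (ybar K) (SOL X F) H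
          \<and> Gap (ybar K) (SOL X F) H \<le> DX2 X / (\<gamma> * \<eta> 0) * (1 / real K powr (1 - b)))
       \<and> (0 \<le> Gap (ybar K) X F
          \<and> Gap (ybar K) X F \<le> DX2 X / \<gamma> * (1 / real K)
               + sqrt 2 * \<eta> 0 * CH X H * DX X / (1 - b) * (1 / real K powr b))
       \<and> (\<forall>\<alpha> M. weakly_sharp X F \<alpha> M \<longrightarrow>
          Gap (ybar K) (SOL X F) H \<ge> - BH X F H *
            ((1 / \<alpha>) * (DX2 X / \<gamma> * (1 / real K)
               + sqrt 2 * CH X H * DX X * \<eta> 0 / (1 - b) * (1 / real K powr b))) powr (1 / M))"
    if hb: "0 < b" "b < 1" "\<forall>k. \<eta> k = \<eta> 0 / (real k + 1) powr b"
      and hK: "real K \<ge> 2 powr (1 / (1 - b))" for b K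
  proof -
    have "1 \<le> 2 powr (1 / (1 - b))" using hb(1,2) by (intro ge_one_powr_ge_zero) auto
    then have K1: "real K \<ge> 1" using hK by linarith
    then have K0: "K > 0" by simp
    have e0: "\<eta> 0 > 0" by (rule eta_pos)
    define e where "e = \<eta> 0"
    have e0': "e > 0" using e0 by (simp add: e_def)
    have hk: "\<eta> k = e / (real k + 1) powr b" for k unfolding e_def by (rule hb(3)[rule_format])
    have ee: "\<eta> 0 = e" by (simp add: e_def)
    have le: "\<forall>k. \<eta> k \<le> \<eta> 0"
    proof
      fix k
      have "1 \<le> (real k + 1) powr b" using hb(1,2) by (intro ge_one_powr_ge_zero) auto
      then have "e * 1 \<le> e * (real k + 1) powr b" using e0' by (intro mult_left_mono) auto
      moreover have "(real k + 1) powr b > 0" by simp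
      ultimately have "e / (real k + 1) powr b \<le> e" by (simp add: pos_divide_le_eq)
      then show "\<eta> k \<le> \<eta> 0" using hk[of k] ee by simp
    qed
    have inv: "1 / \<eta> k = (real k + 1) powr b / \<eta> 0" for k using hk[of k] ee e0' by simp
    have mono: "\<forall>k. 1 / \<eta> k \<le> 1 / \<eta> (Suc k)"
    proof
      fix k
      have "(real k + 1) powr b \<le> (real (Suc k) + 1) powr b" using hb(1) by (intro powr_mono2) auto
      then show "1 / \<eta> k \<le> 1 / \<eta> (Suc k)" unfolding inv using e0 by (intro divide_right_mono) auto
    qed
    obtain n where n: "K = Suc n" using K0 gr0_implies_Suc by blast
    have Kp: "real K powr (1 - b) = real K / real K powr b" using K0 by (simp add: powr_diff)
    have Kpb: "real K powr b > 0" using K0 by simp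
    have g1: "Gap (ybar K) (SOL X F) H \<le> DX2 X / (\<gamma> * \<eta> 0) * (1 / real K powr (1 - b))"
    proof -
      have "Gap (ybar K) S H \<le> DX2 X * (1 / \<eta> n) / (\<gamma> * real K)" using gapH[OF le mono, of n] n by simp
      also have "\<dots> = DX2 X / (\<gamma> * \<eta> 0) * (1 / real K powr (1 - b))"
        unfolding inv Kp using K0 gam e0 Kpb n by (simp add: field_simps)
      finally show ?thesis by (simp add: S_def)
    qed
    have lb: "- BH X F H * distset (ybar K) (SOL X F) \<le> Gap (ybar K) (SOL X F) H"
      using LB by (simp add: S_def)
    have g2: "0 \<le> Gap (ybar K) X F"
      using Gap_ge[OF cX contF order_refl ybarX[OF K0], of "ybar K"] by simp
    define B where "B = DX2 X / \<gamma> * (1 / real K) + sqrt 2 * \<eta> 0 * CH X H * DX X / (1 - b) * (1 / real K powr b)"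
    have g3: "Gap (ybar K) X F \<le> B"
    proof -
      have "(\<Sum>k<K. \<eta> k) = \<eta> 0 * (\<Sum>k<K. 1 / (real k + 1) powr b)"
        unfolding ee by (simp add: hk sum_distrib_left)
      also have "\<dots> \<le> \<eta> 0 * (real K powr (1 - b) / (1 - b))"
        using mult_left_mono[OF sum_pow_bound[OF hb(1,2), of K]] e0 by simp
      finally have se: "(\<Sum>k<K. \<eta> k) \<le> \<eta> 0 * (real K powr (1 - b) / (1 - b))" .
      have E0: "sqrt 2 * CH X H * DX X \<ge> 0" using CH0 DX0 by simp
      have "Gap (ybar K) X F \<le> DX2 X / (\<gamma> * real K) + sqrt 2 * CH X H * DX X * (\<Sum>k<K. \<eta> k) / real K"
        by (rule gapF[OF le K0])
      also have "\<dots> \<le> DX2 X / (\<gamma> * real K) + sqrt 2 * CH X H * DX X * (\<eta> 0 * (real K powr (1 - b) / (1 - b))) / real K"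
        by (intro add_left_mono divide_right_mono mult_left_mono[OF se E0]) simp
      also have "\<dots> = B" unfolding B_def Kp using K0 Kpb hb(1,2) by (simp add: field_simps)
      finally show ?thesis .
    qed
    have g4: "Gap (ybar K) (SOL X F) H \<ge> - BH X F H * ((1 / \<alpha>) * B) powr (1 / M)"
      if ws: "weakly_sharp X F \<alpha> M" for \<alpha> M
    proof -
      have a0: "\<alpha> > 0" and M1: "M \<ge> 1" and wsh: "\<forall>x\<in>X. \<forall>xs\<in>S. F xs \<bullet> (x - xs) \<ge> \<alpha> * (distset x S) powr M"
        using ws by (auto simp: weakly_sharp_def S_def)
      define p where "p = proj S (ybar K)"
      define d where "d = distset (ybar K) S"
      have pS: "p \<in> S" using Sc Sne by (simp add: p_def proj_def closest_point_in_set)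
      have d0: "d \<ge> 0" by (simp add: d_def distset_def)
      have "\<alpha> * d powr M \<le> F p \<bullet> (ybar K - p)" using wsh ybarX[OF K0] pS by (simp add: d_def)
      also have "\<dots> \<le> Gap (ybar K) X F" using Gap_ge[OF cX contF order_refl] pS Sc(3) by blast
      also have "\<dots> \<le> B" by (rule g3)
      finally have "d powr M \<le> (1 / \<alpha>) * B" using a0 by (simp add: field_simps)
      then have "(d powr M) powr (1 / M) \<le> ((1 / \<alpha>) * B) powr (1 / M)"
        using M1 by (intro powr_mono2) auto
      moreover have "(d powr M) powr (1 / M) = d" using M1 d0 by (simp add: powr_powr)
      ultimately have "d \<le> ((1 / \<alpha>) * B) powr (1 / M)" by simp
      then have "- BH X F H * ((1 / \<alpha>) * B) powr (1 / M) \<le> - BH X F H * d"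
        using BH0 by (simp add: mult_left_mono)
      also have "\<dots> \<le> Gap (ybar K) S H" using LB by (simp add: d_def)
      finally show ?thesis by (simp add: S_def)
    qed
    have BB: "B = DX2 X / \<gamma> * (1 / real K) + sqrt 2 * CH X H * DX X * \<eta> 0 / (1 - b) * (1 / real K powr b)"
      by (simp add: B_def algebra_simps)
    show ?thesis using lb g1 g2 g3[unfolded B_def] g4[unfolded BB] by blast
  qed
  have c2: "distset (ybar K) (SOL X F) \<le> (norm (x 0 - xs))\<^sup>2 / (\<gamma> * \<alpha>) * (1 / real K)
       \<and> \<bar>Gap (ybar K) (SOL X F) H\<bar> \<le>
           max (DX2 X / (\<gamma> * \<eta> 0)) (BH X F H * (norm (x 0 - xs))\<^sup>2 / (\<gamma> * \<alpha>)) * (1 / real K)"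
    if ws: "weakly_sharp X F \<alpha> 1" and xsS2: "xs \<in> SOL (SOL X F) H" and ec: "\<forall>k. \<eta> k = \<eta> 0"
      and ea: "2 * \<eta> 0 * norm (H xs) \<le> \<alpha>" and K1: "K \<ge> 1" for \<alpha> xs K
  proof -
    have K0: "K > 0" using K1 by simp
    have e0: "\<eta> 0 > 0" by (rule eta_pos)
    have al0: "\<alpha> > 0" and wsh: "\<forall>x\<in>X. \<forall>xs\<in>S. F xs \<bullet> (x - xs) \<ge> \<alpha> * distset x S"
      using ws by (auto simp: weakly_sharp_def S_def distset_def)
    have xsS: "xs \<in> S" and HxS: "\<forall>v\<in>S. H xs \<bullet> (v - xs) \<ge> 0" using xsS2 by (auto simp: SOL_def S_def)
    have xsX: "xs \<in> X" using xsS Sc(3) by blast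
    have le: "\<forall>k. \<eta> k \<le> \<eta> 0" using ec by (metis order_refl)
    define d where "d = (\<lambda>k. distset (y (Suc k)) S)"
    have st: "\<gamma> * (\<alpha> / 2) * d k \<le> a k xs - a (Suc k) xs" for k
    proof -
      define p where "p = proj S (y (Suc k))"
      have pS: "p \<in> S" using Sc Sne by (simp add: p_def proj_def closest_point_in_set)
      have dk0: "d k \<ge> 0" by (simp add: d_def distset_def)
      have "\<alpha> * d k \<le> F xs \<bullet> (y (Suc k) - xs)" using wsh yX[of k] xsS by (simp add: d_def)
      also have "\<dots> \<le> F (y (Suc k)) \<bullet> (y (Suc k) - xs)" by (rule Fmono[OF xsX yX])
      finally have A: "\<alpha> * d k \<le> F (y (Suc k)) \<bullet> (y (Suc k) - xs)" .
      have "H xs \<bullet> (y (Suc k) - xs) = H xs \<bullet> (y (Suc k) - p) + H xs \<bullet> (p - xs)"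
        by (simp add: inner_diff_right)
      moreover have "H xs \<bullet> (p - xs) \<ge> 0" using HxS pS by blast
      moreover have "- (norm (H xs) * d k) \<le> H xs \<bullet> (y (Suc k) - p)"
        using norm_cauchy_schwarz[of "H xs" "-(y (Suc k) - p)"]
        by (simp add: d_def distset_def p_def norm_minus_commute inner_diff_right)
      ultimately have "- (norm (H xs) * d k) \<le> H xs \<bullet> (y (Suc k) - xs)" by linarith
      also have "\<dots> \<le> H (y (Suc k)) \<bullet> (y (Suc k) - xs)" by (rule Hmono[OF xsX yX])
      finally have B: "- (norm (H xs) * d k) \<le> H (y (Suc k)) \<bullet> (y (Suc k) - xs)" .
      have "\<eta> 0 * (- (norm (H xs) * d k)) \<le> \<eta> 0 * (H (y (Suc k)) \<bullet> (y (Suc k) - xs))"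
        using mult_left_mono[OF B] e0 by simp
      moreover have "\<eta> 0 * norm (H xs) * d k \<le> (\<alpha> / 2) * d k"
        using mult_right_mono[OF ea dk0] by simp
      ultimately have "(\<alpha> / 2) * d k \<le> F (y (Suc k)) \<bullet> (y (Suc k) - xs) + \<eta> k * (H (y (Suc k)) \<bullet> (y (Suc k) - xs))"
        using A ec[rule_format, of k] by (simp add: algebra_simps)
      then have "\<gamma> * ((\<alpha> / 2) * d k) \<le> \<gamma> * (F (y (Suc k)) \<bullet> (y (Suc k) - xs) + \<eta> k * (H (y (Suc k)) \<bullet> (y (Suc k) - xs)))"
        using gam by (simp add: mult_left_mono)
      also have "\<dots> \<le> a k xs - a (Suc k) xs" by (rule EG[OF le[rule_format] xsX])
      finally show ?thesis by (simp add: mult.assoc)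
    qed
    have "\<gamma> * (\<alpha> / 2) * (\<Sum>k<K. d k) \<le> (\<Sum>k<K. a k xs - a (Suc k) xs)"
      unfolding sum_distrib_left by (rule sum_mono) (rule st)
    also have "\<dots> = a 0 xs - a K xs" by (rule sum_lessThan_telescope')
    also have "\<dots> \<le> (norm (x 0 - xs))\<^sup>2 / 2" using a0[of K xs] by (simp add: a_def)
    finally have sd: "(\<Sum>k<K. d k) \<le> (norm (x 0 - xs))\<^sup>2 / (\<gamma> * \<alpha>)"
      using gam al0 by (simp add: field_simps)
    have "distset (ybar K) S \<le> (1 / real K) * (\<Sum>k<K. d k)"
      unfolding d_def by (rule dist_avg[OF Sc(1,2) Sne K0 ybar])
    also have "\<dots> \<le> (1 / real K) * ((norm (x 0 - xs))\<^sup>2 / (\<gamma> * \<alpha>))"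
      using mult_left_mono[OF sd, of "1 / real K"] by simp
    finally have D: "distset (ybar K) S \<le> (norm (x 0 - xs))\<^sup>2 / (\<gamma> * \<alpha>) * (1 / real K)" by (simp add: mult.commute)
    obtain n where n: "K = Suc n" using K0 gr0_implies_Suc by blast
    have mono: "\<forall>k. 1 / \<eta> k \<le> 1 / \<eta> (Suc k)" using ec by (metis order_refl)
    have U: "Gap (ybar K) S H \<le> DX2 X / (\<gamma> * \<eta> 0) * (1 / real K)"
      using gapH[OF le mono, of n] n ec[rule_format, of n] by (simp add: ac_simps)
    have L: "- (BH X F H * (norm (x 0 - xs))\<^sup>2 / (\<gamma> * \<alpha>) * (1 / real K)) \<le> Gap (ybar K) S H"
    proof -
      have "- (BH X F H * ((norm (x 0 - xs))\<^sup>2 / (\<gamma> * \<alpha>) * (1 / real K))) \<le> - BH X F H * distset (ybar K) S"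
        using mult_left_mono[OF D BH0] by simp
      then show ?thesis using LB[of "ybar K"] by simp
    qed
    define P where "P = DX2 X / (\<gamma> * \<eta> 0)"
    define Q where "Q = BH X F H * (norm (x 0 - xs))\<^sup>2 / (\<gamma> * \<alpha>)"
    have r0: "1 / real K \<ge> 0" by simp
    have m1: "P * (1 / real K) \<le> max P Q * (1 / real K)" by (intro mult_right_mono r0) auto
    have m2: "Q * (1 / real K) \<le> max P Q * (1 / real K)" by (intro mult_right_mono r0) auto
    have "\<bar>Gap (ybar K) S H\<bar> \<le> max P Q * (1 / real K)"
      using U L m1 m2 unfolding P_def[symmetric] Q_def[symmetric] abs_le_iff by linarith
    then show ?thesis using D unfolding S_def P_def Q_def by blast
  qed
  show ?thesis
    apply (rule conjI)
     apply (intro allI impI)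
     apply (elim conjE)
     apply (rule c1)
        apply assumption+
    apply (intro allI impI)
    apply (elim conjE)
    apply (rule c2)
        apply assumption+
    done
qed

end
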